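(* Let $A$ be a lattice with finite generating set $X$, let $P$ be a finite partial lattice, $n\in\mathbb N$, $S:=P^{(\vee\wedge)^n\vee}$, and let $g\colon A\to F(P)$ be a lattice homomorphism. Assume that the sublattice $g(A)$ satisfies Dean's condition (D) for the generating set $g(X)$ and that $g(X)\subseteq S$. Then $g$ is lower bounded if and only if the composition $f\circ g\colon A\to(S,\inf,\vee)$ with the standard homomorphism $f$ is lower bounded.
   Context: A partial lattice $P$ is a set with partially defined finite joins and meets; $F(P)$ is the lattice freely generated by $P$ (generated by $P$, and every map from $P$ into a lattice preserving the defined joins and meets extends uniquely to a homomorphism on $F(P)$). For $W\subseteq F(P)$ let $W^\vee:=\{\bigvee U: U\subseteq W\text{ finite}\}$ and $W^\wedge:=\{\bigwedge U:U\subseteq W\text{ finite}\}$, computed in $F(P)$, with $\bigvee\emptyset:=\bigwedge P$; $P^{(\vee\wedge)^n\vee}$ is obtained from $P$ by applying $(\cdot)^\vee$ then $(\cdot)^\wedge$, $n$ times, followed by one more $(\cdot)^\vee$. $S$ is a finite join-subsemilattice of $F(P)$ with least element $\bigwedge P$, so any $a,b\in S$ have an infimum $\inf(a,b)$ in $S$, and $(S,\inf,\vee)$ is a finite lattice. The standard homomorphism is $f\colon F(P)\to S$, $f(d)=\bigvee\{w\in S: w\le d\}$; it is known to be a lower bounded lattice epimorphism onto $(S,\inf,\vee)$ with $f(d)=d$ for $d\in S$. A lattice homomorphism $g\colon A\to L$ is lower bounded if for every $d\in L$ the set $\{x\in A: g(x)\ge d\}$ is empty or has a least element. Dean's condition (D)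 for a lattice $D$ with finite generating set $Q$: for all finite $S',T\subseteq D$ with $\bigwedge S'\le\bigvee T$, either some $s\in S'$ has $s\le\bigvee T$, or some $t\in T$ has $\bigwedge S'\le t$, or some $q\in Q$ has $\bigwedge S'\le q\le\bigvee T$. *)

theory Defs
  imports Main
begin

text \<open>A partial lattice on the (carrier) set P: jn U a means that the join of the finite
nonempty subset U of P is defined and equals a; mt U a likewise for meets.\<close>

definition partial_lattice :: "'p set \<Rightarrow> ('p set \<Rightarrow> 'p \<Rightarrow> bool) \<Rightarrow> ('p set \<Rightarrow> 'p \<Rightarrow> bool) \<Rightarrow> bool" where
  "partial_lattice P jn mt \<longleftrightarrow>
     (\<forall>U a. jn U a \<longrightarrow> finite U \<and> U \<noteq> {} \<and> U \<subseteq> P \<and> a \<in> P) \<and>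
     (\<forall>U a. mt U a \<longrightarrow> finite U \<and> U \<noteq> {} \<and> U \<subseteq> P \<and> a \<in> P) \<and>
     (\<exists>le :: 'p \<Rightarrow> 'p \<Rightarrow> bool.
        (\<forall>x\<in>P. le x x) \<and>
        (\<forall>x\<in>P. \<forall>y\<in>P. le x y \<and> le y x \<longrightarrow> x = y) \<and>
        (\<forall>x\<in>P. \<forall>y\<in>P. \<forall>z\<in>P. le x y \<and> le y z \<longrightarrow> le x z) \<and>
        (\<forall>U a. jn U a \<longrightarrow> (\<forall>u\<in>U. le u a) \<and> (\<forall>b\<in>P. (\<forall>u\<in>U. le u b) \<longrightarrow> le a b)) \<and>
        (\<forall>U a. mt U a \<longrightarrow> (\<forall>u\<in>U. le a u) \<and> (\<forall>b\<in>P. (\<forall>u\<in>U. le b u) \<longrightarrow> le b a)))"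

datatype 'p lterm = Gen 'p | Jn "'p lterm" "'p lterm" | Mt "'p lterm" "'p lterm"

text \<open>The least preorder on lattice terms over P that satisfies the lattice laws and
makes all defined joins and meets of P hold (presentation of F(P)).\<close>

inductive fle :: "'p set \<Rightarrow> ('p set \<Rightarrow> 'p \<Rightarrow> bool) \<Rightarrow> ('p set \<Rightarrow> 'p \<Rightarrow> bool)
                   \<Rightarrow> 'p lterm \<Rightarrow> 'p lterm \<Rightarrow> bool"
  for P jn mt where
  refl: "set_lterm s \<subseteq> P \<Longrightarrow> fle P jn mt s s"
| trans: "fle P jn mt s t \<Longrightarrow> fle P jn mt t u \<Longrightarrow> fle P jn mt s u"
| jn_upper1: "set_lterm s \<subseteq> P \<Longrightarrow> set_lterm t \<subseteq> P \<Longrightarrow> fle P jn mt s (Jn s t)"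
| jn_upper2: "set_lterm s \<subseteq> P \<Longrightarrow> set_lterm t \<subseteq> P \<Longrightarrow> fle P jn mt t (Jn s t)"
| jn_least: "fle P jn mt s u \<Longrightarrow> fle P jn mt t u \<Longrightarrow> fle P jn mt (Jn s t) u"
| mt_lower1: "set_lterm s \<subseteq> P \<Longrightarrow> set_lterm t \<subseteq> P \<Longrightarrow> fle P jn mt (Mt s t) s"
| mt_lower2: "set_lterm s \<subseteq> P \<Longrightarrow> set_lterm t \<subseteq> P \<Longrightarrow> fle P jn mt (Mt s t) t"
| mt_greatest: "fle P jn mt u s \<Longrightarrow> fle P jn mt u t \<Longrightarrow> fle P jn mt u (Mt s t)"
| pj_upper: "jn U a \<Longrightarrow> u \<in> U \<Longrightarrow> fle P jn mt (Gen u) (Gen a)"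
| pj_least: "jn U a \<Longrightarrow> set_lterm t \<subseteq> P \<Longrightarrow> (\<forall>u\<in>U. fle P jn mt (Gen u) t) \<Longrightarrow> fle P jn mt (Gen a) t"
| pm_lower: "mt U a \<Longrightarrow> u \<in> U \<Longrightarrow> fle P jn mt (Gen a) (Gen u)"
| pm_greatest: "mt U a \<Longrightarrow> set_lterm t \<subseteq> P \<Longrightarrow> (\<forall>u\<in>U. fle P jn mt t (Gen u)) \<Longrightarrow> fle P jn mt t (Gen a)"

text \<open>Elements of F(P) are the equivalence classes of terms over P.\<close>

definition fcls :: "'p set \<Rightarrow> ('p set \<Rightarrow> 'p \<Rightarrow> bool) \<Rightarrow> ('p set \<Rightarrow> 'p \<Rightarrow> bool) \<Rightarrow> 'p lterm \<Rightarrow> 'p lterm set" where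
  "fcls P jn mt s = {t. set_lterm t \<subseteq> P \<and> fle P jn mt s t \<and> fle P jn mt t s}"

definition FC :: "'p set \<Rightarrow> ('p set \<Rightarrow> 'p \<Rightarrow> bool) \<Rightarrow> ('p set \<Rightarrow> 'p \<Rightarrow> bool) \<Rightarrow> 'p lterm set set" where
  "FC P jn mt = fcls P jn mt ` {s. set_lterm s \<subseteq> P}"

definition FLe :: "'p set \<Rightarrow> ('p set \<Rightarrow> 'p \<Rightarrow> bool) \<Rightarrow> ('p set \<Rightarrow> 'p \<Rightarrow> bool) \<Rightarrow> 'p lterm set \<Rightarrow> 'p lterm set \<Rightarrow> bool" where
  "FLe P jn mt x y \<longleftrightarrow> (\<exists>s\<in>x. \<exists>t\<in>y. fle P jn mt s t)"

definition FGen :: "'p set \<Rightarrow> ('p set \<Rightarrow> 'p \<Rightarrow> bool) \<Rightarrow> ('p set \<Rightarrow> 'p \<Rightarrow> bool) \<Rightarrow> 'p \<Rightarrow> 'p lterm set" where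
  "FGen P jn mt a = fcls P jn mt (Gen a)"

definition is_lub_in :: "'b set \<Rightarrow> ('b \<Rightarrow> 'b \<Rightarrow> bool) \<Rightarrow> 'b set \<Rightarrow> 'b \<Rightarrow> bool" where
  "is_lub_in C le U z \<longleftrightarrow> z \<in> C \<and> (\<forall>u\<in>U. le u z) \<and> (\<forall>w\<in>C. (\<forall>u\<in>U. le u w) \<longrightarrow> le z w)"

definition is_glb_in :: "'b set \<Rightarrow> ('b \<Rightarrow> 'b \<Rightarrow> bool) \<Rightarrow> 'b set \<Rightarrow> 'b \<Rightarrow> bool" where
  "is_glb_in C le U z \<longleftrightarrow> z \<in> C \<and> (\<forall>u\<in>U. le z u) \<and> (\<forall>w\<in>C. (\<forall>u\<in>U. le w u) \<longrightarrow> le w z)"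

definition Sup_in :: "'b set \<Rightarrow> ('b \<Rightarrow> 'b \<Rightarrow> bool) \<Rightarrow> 'b set \<Rightarrow> 'b" where
  "Sup_in C le U = (THE z. is_lub_in C le U z)"

definition Inf_in :: "'b set \<Rightarrow> ('b \<Rightarrow> 'b \<Rightarrow> bool) \<Rightarrow> 'b set \<Rightarrow> 'b" where
  "Inf_in C le U = (THE z. is_glb_in C le U z)"

definition FSup :: "'p set \<Rightarrow> ('p set \<Rightarrow> 'p \<Rightarrow> bool) \<Rightarrow> ('p set \<Rightarrow> 'p \<Rightarrow> bool) \<Rightarrow> 'p lterm set set \<Rightarrow> 'p lterm set" where
  "FSup P jn mt U = Sup_in (FC P jn mt) (FLe P jn mt) U"

definition FInf :: "'p set \<Rightarrow> ('p set \<Rightarrow> 'p \<Rightarrow> bool) \<Rightarrow> ('p set \<Rightarrow> 'p \<Rightarrow> bool) \<Rightarrow> 'p lterm set set \<Rightarrow> 'p lterm set" where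
  "FInf P jn mt U = Inf_in (FC P jn mt) (FLe P jn mt) U"

text \<open>W^\<or>: joins of finite subsets, with the empty join being the meet of P.\<close>
definition jclos :: "'p set \<Rightarrow> ('p set \<Rightarrow> 'p \<Rightarrow> bool) \<Rightarrow> ('p set \<Rightarrow> 'p \<Rightarrow> bool) \<Rightarrow> 'p lterm set set \<Rightarrow> 'p lterm set set" where
  "jclos P jn mt W =
     {if U = {} then FInf P jn mt (FGen P jn mt ` P) else FSup P jn mt U | U. finite U \<and> U \<subseteq> W}"

text \<open>W^\<and>: meets of finite nonempty subsets.\<close>
definition mclos :: "'p set \<Rightarrow> ('p set \<Rightarrow> 'p \<Rightarrow> bool) \<Rightarrow> ('p set \<Rightarrow> 'p \<Rightarrow> bool) \<Rightarrow> 'p lterm set set \<Rightarrow> 'p lterm set set" where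
  "mclos P jn mt W = {FInf P jn mt U | U. finite U \<and> U \<noteq> {} \<and> U \<subseteq> W}"

definition Sn :: "'p set \<Rightarrow> ('p set \<Rightarrow> 'p \<Rightarrow> bool) \<Rightarrow> ('p set \<Rightarrow> 'p \<Rightarrow> bool) \<Rightarrow> nat \<Rightarrow> 'p lterm set set" where
  "Sn P jn mt n = jclos P jn mt (((mclos P jn mt \<circ> jclos P jn mt) ^^ n) (FGen P jn mt ` P))"

definition std_hom :: "'p set \<Rightarrow> ('p set \<Rightarrow> 'p \<Rightarrow> bool) \<Rightarrow> ('p set \<Rightarrow> 'p \<Rightarrow> bool) \<Rightarrow> 'p lterm set set
                        \<Rightarrow> 'p lterm set \<Rightarrow> 'p lterm set" where
  "std_hom P jn mt S d = FSup P jn mt {w \<in> S. FLe P jn mt w d}"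

definition FL_hom :: "'p set \<Rightarrow> ('p set \<Rightarrow> 'p \<Rightarrow> bool) \<Rightarrow> ('p set \<Rightarrow> 'p \<Rightarrow> bool) \<Rightarrow> ('a::lattice \<Rightarrow> 'p lterm set) \<Rightarrow> bool" where
  "FL_hom P jn mt g \<longleftrightarrow> (\<forall>x. g x \<in> FC P jn mt) \<and>
     (\<forall>x y. g (sup x y) = FSup P jn mt {g x, g y}) \<and>
     (\<forall>x y. g (inf x y) = FInf P jn mt {g x, g y})"

definition lower_bounded :: "('a::lattice \<Rightarrow> 'b) \<Rightarrow> 'b set \<Rightarrow> ('b \<Rightarrow> 'b \<Rightarrow> bool) \<Rightarrow> bool" where
  "lower_bounded h C le \<longleftrightarrow>
     (\<forall>d\<in>C. {x. le d (h x)} = {} \<or> (\<exists>m. le d (h m) \<and> (\<forall>x. le d (h x) \<longrightarrow> m \<le> x)))"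

definition dean_FL :: "'p set \<Rightarrow> ('p set \<Rightarrow> 'p \<Rightarrow> bool) \<Rightarrow> ('p set \<Rightarrow> 'p \<Rightarrow> bool)
                        \<Rightarrow> 'p lterm set set \<Rightarrow> 'p lterm set set \<Rightarrow> bool" where
  "dean_FL P jn mt D Q \<longleftrightarrow>
     (\<forall>S' T. finite S' \<and> S' \<noteq> {} \<and> S' \<subseteq> D \<and> finite T \<and> T \<noteq> {} \<and> T \<subseteq> D \<and>
        FLe P jn mt (FInf P jn mt S') (FSup P jn mt T) \<longrightarrow>
          (\<exists>s\<in>S'. FLe P jn mt s (FSup P jn mt T)) \<or>
          (\<exists>t\<in>T. FLe P jn mt (FInf P jn mt S') t) \<or>
          (\<exists>q\<in>Q. FLe P jn mt (FInf P jn mt S') q \<and> FLe P jn mt q (FSup P jn mt T)))"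

inductive_set lat_gen :: "'a::lattice set \<Rightarrow> 'a set" for X where
  base: "x \<in> X \<Longrightarrow> x \<in> lat_gen X"
| sup: "x \<in> lat_gen X \<Longrightarrow> y \<in> lat_gen X \<Longrightarrow> sup x y \<in> lat_gen X"
| inf: "x \<in> lat_gen X \<Longrightarrow> y \<in> lat_gen X \<Longrightarrow> inf x y \<in> lat_gen X"

end

theory Submission
  imports Defs
begin


lemma pl_jn: "partial_lattice P jn mt \<Longrightarrow> jn U a \<Longrightarrow> U \<subseteq> P \<and> a \<in> P"
  unfolding partial_lattice_def by (elim conjE) (drule spec, drule spec, drule (1) mp, simp)
lemma pl_mt: "partial_lattice P jn mt \<Longrightarrow> mt U a \<Longrightarrow> U \<subseteq> P \<and> a \<in> P"
  unfolding partial_lattice_def by (elim conjE) (rotate_tac, drule spec, drule spec, drule (1) mp, simp)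

lemma fle_set: "fle P jn mt s t \<Longrightarrow> partial_lattice P jn mt \<Longrightarrow> set_lterm s \<subseteq> P \<and> set_lterm t \<subseteq> P"
  by (induction rule: fle.induct) (auto dest: pl_jn pl_mt)

fun dbit :: "('p lterm \<Rightarrow> 'p lterm \<Rightarrow> bool) \<Rightarrow> 'p lterm \<Rightarrow> 'p lterm \<Rightarrow> 'p lterm \<Rightarrow> bool" where
  "dbit le uu vv (Gen p) = (if le uu (Gen p) \<and> le (Gen p) vv then False else le uu (Gen p))"
| "dbit le uu vv (Jn s t) = (if le uu (Jn s t) \<and> le (Jn s t) vv then dbit le uu vv s \<or> dbit le uu vv t else le uu (Jn s t))"
| "dbit le uu vv (Mt s t) = (if le uu (Mt s t) \<and> le (Mt s t) vv then dbit le uu vv s \<and> dbit le uu vv t else le uu (Mt s t))"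

lemma dbit_ge: "dbit le uu vv t \<Longrightarrow> le uu t"
  by (cases t) (auto split: if_splits)

lemma dbit_out: "\<not> (le uu t \<and> le t vv) \<Longrightarrow> dbit le uu vv t = le uu t"
  by (cases t) auto

lemma dbit_mono:
  assumes "fle P jn mt s t" and PL: "partial_lattice P jn mt"
    and noP: "\<forall>p\<in>P. \<not> (fle P jn mt uu (Gen p) \<and> fle P jn mt (Gen p) vv)"
  shows "dbit (fle P jn mt) uu vv s \<Longrightarrow> dbit (fle P jn mt) uu vv t"
  using assms(1)
proof (induction rule: fle.induct)
  case (refl s) then show ?case by simp
next
  case (trans s t u) then show ?case by simp
next
  case (jn_upper1 s t)
  have "fle P jn mt uu s" using jn_upper1(3) by (rule dbit_ge)
  moreover have "fle P jn mt s (Jn s t)" using jn_upper1 by (intro fle.jn_upper1)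
  ultimately have "fle P jn mt uu (Jn s t)" by (rule fle.trans)
  then show ?case using jn_upper1 by simp
next
  case (jn_upper2 s t)
  have "fle P jn mt uu t" using jn_upper2(3) by (rule dbit_ge)
  moreover have "fle P jn mt t (Jn s t)" using jn_upper2 by (intro fle.jn_upper2)
  ultimately have "fle P jn mt uu (Jn s t)" by (rule fle.trans)
  then show ?case using jn_upper2 by simp
next
  case (jn_least s w t)
  show ?case
  proof (cases "fle P jn mt uu (Jn s t) \<and> fle P jn mt (Jn s t) vv")
    case True
    then have "dbit (fle P jn mt) uu vv s \<or> dbit (fle P jn mt) uu vv t" using jn_least(5) by simp
    then show ?thesis using jn_least(3,4) by blast
  next
    case False
    have u: "fle P jn mt uu (Jn s t)" using jn_least(5) by (rule dbit_ge)
    with False have nv: "\<not> fle P jn mt (Jn s t) vv" by simp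
    have jw: "fle P jn mt (Jn s t) w" using jn_least(1,2) by (rule fle.jn_least)
    have "\<not> fle P jn mt w vv" using nv jw fle.trans by blast
    moreover have "fle P jn mt uu w" using u jw by (rule fle.trans)
    ultimately show ?thesis using dbit_out[of "fle P jn mt" uu _ vv] by simp
  qed
next
  case (mt_lower1 s t)
  show ?case
  proof (cases "fle P jn mt uu (Mt s t) \<and> fle P jn mt (Mt s t) vv")
    case True
    then show ?thesis using mt_lower1(3) by simp
  next
    case False
    have u: "fle P jn mt uu (Mt s t)" using mt_lower1(3) by (rule dbit_ge)
    with False have nv: "\<not> fle P jn mt (Mt s t) vv" by simp
    have jw: "fle P jn mt (Mt s t) s" using mt_lower1 by (intro fle.mt_lower1)
    have "\<not> fle P jn mt s vv" using nv jw fle.trans by blast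
    moreover have "fle P jn mt uu s" using u jw by (rule fle.trans)
    ultimately show ?thesis using dbit_out[of "fle P jn mt" uu _ vv] by simp
  qed
next
  case (mt_lower2 s t)
  show ?case
  proof (cases "fle P jn mt uu (Mt s t) \<and> fle P jn mt (Mt s t) vv")
    case True
    then show ?thesis using mt_lower2(3) by simp
  next
    case False
    have u: "fle P jn mt uu (Mt s t)" using mt_lower2(3) by (rule dbit_ge)
    with False have nv: "\<not> fle P jn mt (Mt s t) vv" by simp
    have jw: "fle P jn mt (Mt s t) t" using mt_lower2 by (intro fle.mt_lower2)
    have "\<not> fle P jn mt t vv" using nv jw fle.trans by blast
    moreover have "fle P jn mt uu t" using u jw by (rule fle.trans)
    ultimately show ?thesis using dbit_out[of "fle P jn mt" uu _ vv] by simp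
  qed
next
  case (mt_greatest w s t)
  have u: "fle P jn mt uu w" using mt_greatest(5) by (rule dbit_ge)
  have "fle P jn mt w (Mt s t)" using mt_greatest(1,2) by (rule fle.mt_greatest)
  with u have "fle P jn mt uu (Mt s t)" by (rule fle.trans)
  then show ?case using mt_greatest(3,4,5) by simp
next
  case (pj_upper U a x)
  have P: "x \<in> P" "a \<in> P" using pl_jn[OF PL pj_upper(1)] pj_upper(2) by auto
  have "fle P jn mt uu (Gen x)" using pj_upper(3) by (rule dbit_ge)
  moreover have "fle P jn mt (Gen x) (Gen a)" using pj_upper(1,2) by (rule fle.pj_upper)
  ultimately have "fle P jn mt uu (Gen a)" by (rule fle.trans)
  then show ?case using noP P by simp
next
  case (pj_least U a t)
  have P: "a \<in> P" using pl_jn[OF PL pj_least(1)] by auto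
  have u: "fle P jn mt uu (Gen a)" using pj_least(4) by (rule dbit_ge)
  with noP P have nv: "\<not> fle P jn mt (Gen a) vv" by auto
  have jw: "fle P jn mt (Gen a) t" using pj_least(1,2) pj_least(3) by (intro fle.pj_least) auto
  have "\<not> fle P jn mt t vv" using nv jw fle.trans by blast
  moreover have "fle P jn mt uu t" using u jw by (rule fle.trans)
  ultimately show ?case using dbit_out[of "fle P jn mt" uu _ vv] by simp
next
  case (pm_lower U a x)
  have P: "x \<in> P" "a \<in> P" using pl_mt[OF PL pm_lower(1)] pm_lower(2) by auto
  have "fle P jn mt uu (Gen a)" using pm_lower(3) by (rule dbit_ge)
  moreover have "fle P jn mt (Gen a) (Gen x)" using pm_lower(1,2) by (rule fle.pm_lower)
  ultimately have "fle P jn mt uu (Gen x)" by (rule fle.trans)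
  then show ?case using noP P by simp
next
  case (pm_greatest U a t)
  have P: "a \<in> P" using pl_mt[OF PL pm_greatest(1)] by auto
  have u: "fle P jn mt uu t" using pm_greatest(4) by (rule dbit_ge)
  have "fle P jn mt t (Gen a)" using pm_greatest(1,2) pm_greatest(3) by (intro fle.pm_greatest) auto
  with u have "fle P jn mt uu (Gen a)" by (rule fle.trans)
  then show ?case using noP P by simp
qed

lemma D2:
  assumes PL: "partial_lattice P jn mt"
    and sets: "set_lterm d1 \<subseteq> P" "set_lterm d2 \<subseteq> P" "set_lterm b1 \<subseteq> P" "set_lterm b2 \<subseteq> P"
    and le: "fle P jn mt (Mt d1 d2) (Jn b1 b2)"
  shows "fle P jn mt d1 (Jn b1 b2) \<or> fle P jn mt d2 (Jn b1 b2) \<or> fle P jn mt (Mt d1 d2) b1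
     \<or> fle P jn mt (Mt d1 d2) b2
     \<or> (\<exists>p\<in>P. fle P jn mt (Mt d1 d2) (Gen p) \<and> fle P jn mt (Gen p) (Jn b1 b2))"
proof (rule ccontr)
  let ?L = "fle P jn mt" let ?u = "Mt d1 d2" let ?v = "Jn b1 b2"
  assume "\<not> ?thesis"
  hence n: "\<not> ?L d1 ?v" "\<not> ?L d2 ?v" "\<not> ?L ?u b1" "\<not> ?L ?u b2"
     "\<forall>p\<in>P. \<not> (?L ?u (Gen p) \<and> ?L (Gen p) ?v)" by auto
  have u1: "?L ?u d1" using sets by (intro fle.mt_lower1)
  have u2: "?L ?u d2" using sets by (intro fle.mt_lower2)
  have b1: "dbit ?L ?u ?v d1" using dbit_out[of ?L ?u d1 ?v] n(1) u1 by simp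
  have b2: "dbit ?L ?u ?v d2" using dbit_out[of ?L ?u d2 ?v] n(2) u2 by simp
  have uu: "?L ?u ?u" using sets by (intro fle.refl) auto
  have vv: "?L ?v ?v" using sets by (intro fle.refl) auto
  have bu: "dbit ?L ?u ?v ?u" using uu le b1 b2 by simp
  have c1: "\<not> dbit ?L ?u ?v b1" using dbit_out[of ?L ?u b1 ?v] n(3) by simp
  have c2: "\<not> dbit ?L ?u ?v b2" using dbit_out[of ?L ?u b2 ?v] n(4) by simp
  have bv: "\<not> dbit ?L ?u ?v ?v" using c1 c2 le vv by simp
  show False using dbit_mono[OF le PL n(5)] bu bv by blast
qed



lemma lub_unique:
  assumes "\<And>x y. x\<in>C \<Longrightarrow> y\<in>C \<Longrightarrow> le x y \<Longrightarrow> le y x \<Longrightarrow> x = y" "is_lub_in C le U z"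
  shows "Sup_in C le U = z"
  unfolding Sup_in_def
proof (rule the_equality)
  show "is_lub_in C le U z" by fact
  fix z' assume "is_lub_in C le U z'"
  with assms(2) show "z' = z" using assms(1) unfolding is_lub_in_def by blast
qed

lemma glb_unique:
  assumes "\<And>x y. x\<in>C \<Longrightarrow> y\<in>C \<Longrightarrow> le x y \<Longrightarrow> le y x \<Longrightarrow> x = y" "is_glb_in C le U z"
  shows "Inf_in C le U = z"
  unfolding Inf_in_def
proof (rule the_equality)
  show "is_glb_in C le U z" by fact
  fix z' assume "is_glb_in C le U z'"
  with assms(2) show "z' = z" using assms(1) unfolding is_glb_in_def by blast
qed

context
  fixes P :: "'p set" and jn mt :: "'p set \<Rightarrow> 'p \<Rightarrow> bool"
  assumes PL: "partial_lattice P jn mt"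
begin

lemma mem_fcls: "set_lterm s \<subseteq> P \<Longrightarrow> s \<in> fcls P jn mt s"
  by (auto simp: fcls_def intro: fle.refl)

lemma FLe_fcls: "set_lterm s \<subseteq> P \<Longrightarrow> set_lterm t \<subseteq> P \<Longrightarrow>
   FLe P jn mt (fcls P jn mt s) (fcls P jn mt t) \<longleftrightarrow> fle P jn mt s t"
  unfolding FLe_def fcls_def
proof safe
  fix s' t' assume "fle P jn mt s s'" "fle P jn mt s' t'" "fle P jn mt t' t"
  then show "fle P jn mt s t" using fle.trans by metis
next
  assume "set_lterm s \<subseteq> P" "set_lterm t \<subseteq> P" "fle P jn mt s t"
  then show "\<exists>sa\<in>{ta. set_lterm ta \<subseteq> P \<and> fle P jn mt s ta \<and> fle P jn mt ta s}.
       \<exists>ta\<in>{ta. set_lterm ta \<subseteq> P \<and> fle P jn mt t ta \<and> fle P jn mt ta t}. fle P jn mt sa ta"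
    using fle.refl by blast
qed

lemma fcls_eq: "set_lterm s \<subseteq> P \<Longrightarrow> set_lterm t \<subseteq> P \<Longrightarrow>
   fcls P jn mt s = fcls P jn mt t \<longleftrightarrow> (fle P jn mt s t \<and> fle P jn mt t s)"
proof
  assume s: "set_lterm s \<subseteq> P" and t: "set_lterm t \<subseteq> P" and e: "fcls P jn mt s = fcls P jn mt t"
  have "s \<in> fcls P jn mt t" using mem_fcls[OF s] e by simp
  then show "fle P jn mt s t \<and> fle P jn mt t s" by (simp add: fcls_def)
next
  assume "fle P jn mt s t \<and> fle P jn mt t s"
  then show "fcls P jn mt s = fcls P jn mt t"
    unfolding fcls_def using fle.trans by blast
qed

lemma FC_E: "c \<in> FC P jn mt \<Longrightarrow> \<exists>s. set_lterm s \<subseteq> P \<and> c = fcls P jn mt s"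
  by (auto simp: FC_def)

lemma fcls_FC: "set_lterm s \<subseteq> P \<Longrightarrow> fcls P jn mt s \<in> FC P jn mt"
  by (auto simp: FC_def)

lemma FLe_antisym: "x \<in> FC P jn mt \<Longrightarrow> y \<in> FC P jn mt \<Longrightarrow> FLe P jn mt x y \<Longrightarrow> FLe P jn mt y x \<Longrightarrow> x = y"
  using FC_E FLe_fcls fcls_eq by metis

lemma FLe_trans: "x \<in> FC P jn mt \<Longrightarrow> y \<in> FC P jn mt \<Longrightarrow> z \<in> FC P jn mt \<Longrightarrow>
    FLe P jn mt x y \<Longrightarrow> FLe P jn mt y z \<Longrightarrow> FLe P jn mt x z"
  using FC_E FLe_fcls fle.trans by metis

lemma FLe_refl: "x \<in> FC P jn mt \<Longrightarrow> FLe P jn mt x x"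
  using FC_E FLe_fcls fle.refl by metis

lemma glb_exists: "finite V \<Longrightarrow> V \<noteq> {} \<Longrightarrow> V \<subseteq> FC P jn mt \<Longrightarrow> \<exists>z. is_glb_in (FC P jn mt) (FLe P jn mt) V z"
proof (induction V rule: finite_ne_induct)
  case (singleton c)
  then show ?case by (auto simp: is_glb_in_def intro: FLe_refl)
next
  case (insert c V)
  then obtain z where z: "is_glb_in (FC P jn mt) (FLe P jn mt) V z" by auto
  obtain s where s: "set_lterm s \<subseteq> P" "c = fcls P jn mt s" using insert FC_E by auto
  obtain t where t: "set_lterm t \<subseteq> P" "z = fcls P jn mt t" using z FC_E unfolding is_glb_in_def by blast
  have st: "set_lterm (Mt s t) \<subseteq> P" using s t by simp
  have zFC: "z \<in> FC P jn mt" using z unfolding is_glb_in_def by blast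
  have "is_glb_in (FC P jn mt) (FLe P jn mt) (insert c V) (fcls P jn mt (Mt s t))"
    unfolding is_glb_in_def
  proof (intro conjI ballI impI)
    show "fcls P jn mt (Mt s t) \<in> FC P jn mt" using st by (rule fcls_FC)
  next
    fix x assume "x \<in> insert c V"
    then show "FLe P jn mt (fcls P jn mt (Mt s t)) x"
    proof
      assume "x = c" then show ?thesis using s t st FLe_fcls fle.mt_lower1 by metis
    next
      assume xV: "x \<in> V"
      have "FLe P jn mt (fcls P jn mt (Mt s t)) z" using s t st FLe_fcls fle.mt_lower2 by metis
      moreover have "FLe P jn mt z x" using z xV unfolding is_glb_in_def by blast
      moreover have "x \<in> FC P jn mt" using xV insert.prems by blast
      ultimately show ?thesis using FLe_trans[OF fcls_FC[OF st] zFC] by blast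
    qed
  next
    fix w assume w: "w \<in> FC P jn mt" "\<forall>x\<in>insert c V. FLe P jn mt w x"
    obtain q where q: "set_lterm q \<subseteq> P" "w = fcls P jn mt q" using w FC_E by blast
    have "FLe P jn mt w z" using z w unfolding is_glb_in_def by blast
    then have 1: "fle P jn mt q t" using q t FLe_fcls by metis
    have "FLe P jn mt w c" using w by blast
    then have 2: "fle P jn mt q s" using q s FLe_fcls by metis
    have "fle P jn mt q (Mt s t)" using 2 1 by (rule fle.mt_greatest)
    then show "FLe P jn mt w (fcls P jn mt (Mt s t))" using q st FLe_fcls by metis
  qed
  then show ?case by blast
qed

lemma FGen_FC: "p \<in> P \<Longrightarrow> FGen P jn mt p \<in> FC P jn mt"
  unfolding FGen_def by (rule fcls_FC) simp

lemma bottom_exists: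
  assumes fin: "finite P" and ne: "P \<noteq> {}"
  shows "\<exists>t0. set_lterm t0 \<subseteq> P \<and> (\<forall>s. set_lterm s \<subseteq> P \<longrightarrow> fle P jn mt t0 s)"
proof -
  have "finite (FGen P jn mt ` P)" "FGen P jn mt ` P \<noteq> {}" "FGen P jn mt ` P \<subseteq> FC P jn mt"
    using fin ne FGen_FC by (auto simp del: FGen_def)
  then obtain b where b: "is_glb_in (FC P jn mt) (FLe P jn mt) (FGen P jn mt ` P) b"
    using glb_exists by presburger
  have "b \<in> FC P jn mt" using b unfolding is_glb_in_def by simp
  then obtain t0 where t0: "set_lterm t0 \<subseteq> P" "b = fcls P jn mt t0" using FC_E by blast
  have gp: "fle P jn mt t0 (Gen p)" if "p \<in> P" for p
  proof -
    have "FLe P jn mt b (FGen P jn mt p)" using b that unfolding is_glb_in_def by simp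
    moreover have "set_lterm (Gen p) \<subseteq> P" using that by simp
    ultimately show ?thesis using t0 FLe_fcls[of t0 "Gen p"] unfolding FGen_def by simp
  qed
  have "set_lterm s \<subseteq> P \<Longrightarrow> fle P jn mt t0 s" for s
  proof (induction s)
    case (Gen p) then show ?case using gp by simp
  next
    case (Jn s1 s2)
    then have "fle P jn mt t0 s1" "fle P jn mt s1 (Jn s1 s2)" by (auto intro: fle.jn_upper1)
    then show ?case by (rule fle.trans)
  next
    case (Mt s1 s2)
    then show ?case by (auto intro: fle.mt_greatest)
  qed
  then show ?thesis using t0 by blast
qed

lemma lub_exists:
  assumes fin: "finite P" and ne: "P \<noteq> {}"
  shows "finite V \<Longrightarrow> V \<subseteq> FC P jn mt \<Longrightarrow> \<exists>z. is_lub_in (FC P jn mt) (FLe P jn mt) V z"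
proof (induction V rule: finite_induct)
  case empty
  obtain t0 where t0: "set_lterm t0 \<subseteq> P" "\<forall>s. set_lterm s \<subseteq> P \<longrightarrow> fle P jn mt t0 s"
    using bottom_exists[OF fin ne] by blast
  have "is_lub_in (FC P jn mt) (FLe P jn mt) {} (fcls P jn mt t0)"
    unfolding is_lub_in_def
  proof (intro conjI ballI impI)
    show "fcls P jn mt t0 \<in> FC P jn mt" using t0(1) by (rule fcls_FC)
  next
    fix w assume "w \<in> FC P jn mt"
    then obtain q where q: "set_lterm q \<subseteq> P" "w = fcls P jn mt q" using FC_E by blast
    then show "FLe P jn mt (fcls P jn mt t0) w" using t0 FLe_fcls by blast
  qed auto
  then show ?case by blast
next
  case (insert c V)
  then obtain z where z: "is_lub_in (FC P jn mt) (FLe P jn mt) V z" by auto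
  obtain s where s: "set_lterm s \<subseteq> P" "c = fcls P jn mt s" using insert FC_E by auto
  obtain t where t: "set_lterm t \<subseteq> P" "z = fcls P jn mt t" using z FC_E unfolding is_lub_in_def by blast
  have st: "set_lterm (Jn s t) \<subseteq> P" using s t by simp
  have zFC: "z \<in> FC P jn mt" using z unfolding is_lub_in_def by blast
  have "is_lub_in (FC P jn mt) (FLe P jn mt) (insert c V) (fcls P jn mt (Jn s t))"
    unfolding is_lub_in_def
  proof (intro conjI ballI impI)
    show "fcls P jn mt (Jn s t) \<in> FC P jn mt" using st by (rule fcls_FC)
  next
    fix x assume "x \<in> insert c V"
    then show "FLe P jn mt x (fcls P jn mt (Jn s t))"
    proof
      assume "x = c" then show ?thesis using s t st FLe_fcls fle.jn_upper1 by metis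
    next
      assume xV: "x \<in> V"
      have "FLe P jn mt z (fcls P jn mt (Jn s t))" using s t st FLe_fcls fle.jn_upper2 by metis
      moreover have "FLe P jn mt x z" using z xV unfolding is_lub_in_def by blast
      moreover have "x \<in> FC P jn mt" using xV insert.prems by blast
      ultimately show ?thesis using FLe_trans[OF _ zFC fcls_FC[OF st]] by blast
    qed
  next
    fix w assume w: "w \<in> FC P jn mt" "\<forall>x\<in>insert c V. FLe P jn mt x w"
    obtain q where q: "set_lterm q \<subseteq> P" "w = fcls P jn mt q" using w FC_E by blast
    have "FLe P jn mt z w" using z w unfolding is_lub_in_def by blast
    then have 1: "fle P jn mt t q" using q t FLe_fcls by metis
    have "FLe P jn mt c w" using w by blast
    then have 2: "fle P jn mt s q" using q s FLe_fcls by metis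
    have "fle P jn mt (Jn s t) q" using 2 1 by (rule fle.jn_least)
    then show "FLe P jn mt (fcls P jn mt (Jn s t)) w" using q st FLe_fcls by metis
  qed
  then show ?case by blast
qed

lemma FSup_lub:
  assumes "finite P" "P \<noteq> {}" "finite V" "V \<subseteq> FC P jn mt"
  shows "is_lub_in (FC P jn mt) (FLe P jn mt) V (FSup P jn mt V)"
proof -
  obtain z where z: "is_lub_in (FC P jn mt) (FLe P jn mt) V z" using lub_exists assms by blast
  have "FSup P jn mt V = z" unfolding FSup_def by (rule lub_unique[OF _ z]) (rule FLe_antisym)
  then show ?thesis using z by simp
qed

lemma FInf_glb:
  assumes "finite V" "V \<noteq> {}" "V \<subseteq> FC P jn mt"
  shows "is_glb_in (FC P jn mt) (FLe P jn mt) V (FInf P jn mt V)"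
proof -
  obtain z where z: "is_glb_in (FC P jn mt) (FLe P jn mt) V z" using glb_exists assms by blast
  have "FInf P jn mt V = z" unfolding FInf_def by (rule glb_unique[OF _ z]) (rule FLe_antisym)
  then show ?thesis using z by simp
qed

lemma FSup_single: "c \<in> FC P jn mt \<Longrightarrow> FSup P jn mt {c} = c"
  unfolding FSup_def by (rule lub_unique[OF FLe_antisym]) (auto simp: is_lub_in_def intro: FLe_refl)

lemma FInf_single: "c \<in> FC P jn mt \<Longrightarrow> FInf P jn mt {c} = c"
  unfolding FInf_def by (rule glb_unique[OF FLe_antisym]) (auto simp: is_glb_in_def intro: FLe_refl)

lemma FSup2: "set_lterm s \<subseteq> P \<Longrightarrow> set_lterm t \<subseteq> P \<Longrightarrow>
   FSup P jn mt {fcls P jn mt s, fcls P jn mt t} = fcls P jn mt (Jn s t)"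
  unfolding FSup_def
proof (rule lub_unique)
  assume s: "set_lterm s \<subseteq> P" and t: "set_lterm t \<subseteq> P"
  have st: "set_lterm (Jn s t) \<subseteq> P" using s t by simp
  show "is_lub_in (FC P jn mt) (FLe P jn mt) {fcls P jn mt s, fcls P jn mt t} (fcls P jn mt (Jn s t))"
    unfolding is_lub_in_def
  proof (intro conjI ballI impI)
    show "fcls P jn mt (Jn s t) \<in> FC P jn mt" using st by (rule fcls_FC)
  next
    fix x assume "x \<in> {fcls P jn mt s, fcls P jn mt t}"
    then show "FLe P jn mt x (fcls P jn mt (Jn s t))"
      using s t st FLe_fcls fle.jn_upper1 fle.jn_upper2 by (metis empty_iff insert_iff)
  next
    fix w assume w: "w \<in> FC P jn mt" "\<forall>x\<in>{fcls P jn mt s, fcls P jn mt t}. FLe P jn mt x w"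
    obtain q where q: "set_lterm q \<subseteq> P" "w = fcls P jn mt q" using w FC_E by blast
    have "fle P jn mt s q" "fle P jn mt t q" using w q s t FLe_fcls by auto
    then have "fle P jn mt (Jn s t) q" by (rule fle.jn_least)
    then show "FLe P jn mt (fcls P jn mt (Jn s t)) w" using q st FLe_fcls by metis
  qed
qed (rule FLe_antisym)

lemma FInf2: "set_lterm s \<subseteq> P \<Longrightarrow> set_lterm t \<subseteq> P \<Longrightarrow>
   FInf P jn mt {fcls P jn mt s, fcls P jn mt t} = fcls P jn mt (Mt s t)"
  unfolding FInf_def
proof (rule glb_unique)
  assume s: "set_lterm s \<subseteq> P" and t: "set_lterm t \<subseteq> P"
  have st: "set_lterm (Mt s t) \<subseteq> P" using s t by simp
  show "is_glb_in (FC P jn mt) (FLe P jn mt) {fcls P jn mt s, fcls P jn mt t} (fcls P jn mt (Mt s t))"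
    unfolding is_glb_in_def
  proof (intro conjI ballI impI)
    show "fcls P jn mt (Mt s t) \<in> FC P jn mt" using st by (rule fcls_FC)
  next
    fix x assume "x \<in> {fcls P jn mt s, fcls P jn mt t}"
    then show "FLe P jn mt (fcls P jn mt (Mt s t)) x"
      using s t st FLe_fcls fle.mt_lower1 fle.mt_lower2 by (metis empty_iff insert_iff)
  next
    fix w assume w: "w \<in> FC P jn mt" "\<forall>x\<in>{fcls P jn mt s, fcls P jn mt t}. FLe P jn mt w x"
    obtain q where q: "set_lterm q \<subseteq> P" "w = fcls P jn mt q" using w FC_E by blast
    have "fle P jn mt q s" "fle P jn mt q t" using w q s t FLe_fcls by auto
    then have "fle P jn mt q (Mt s t)" by (rule fle.mt_greatest)
    then show "FLe P jn mt w (fcls P jn mt (Mt s t))" using q st FLe_fcls by metis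
  qed
qed (rule FLe_antisym)

end


lemma set_lterm_ne: "set_lterm t \<noteq> {}"
  by (induction t) auto

lemma lowb:
  fixes Z :: "'a::lattice set"
  assumes "finite Z" "Z \<noteq> {}" "\<forall>z\<in>Z. Q z" "\<And>x y. Q x \<Longrightarrow> Q y \<Longrightarrow> Q (inf x y)"
  shows "\<exists>m. Q m \<and> (\<forall>z\<in>Z. m \<le> z)"
  using assms(1,2,3)
proof (induction Z rule: finite_ne_induct)
  case (singleton x) then show ?case by auto
next
  case (insert x F)
  then obtain m where m: "Q m" "\<forall>z\<in>F. m \<le> z" by auto
  have "Q (inf x m)" using assms(4) insert.prems m(1) by simp
  moreover have "\<forall>z\<in>insert x F. inf x m \<le> z" using m(2) by (auto intro: le_infI2)
  ultimately show ?case by blast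
qed

context
  fixes P :: "'p set" and jn mt :: "'p set \<Rightarrow> 'p \<Rightarrow> bool"
  assumes PL: "partial_lattice P jn mt" and fin: "finite P" and ne: "P \<noteq> {}"
begin

lemma jclos_props:
  assumes "finite W" "W \<subseteq> FC P jn mt"
  shows "finite (jclos P jn mt W) \<and> jclos P jn mt W \<subseteq> FC P jn mt \<and> W \<subseteq> jclos P jn mt W"
proof (intro conjI)
  let ?h = "\<lambda>U. if U = {} then FInf P jn mt (FGen P jn mt ` P) else FSup P jn mt U"
  have eq: "jclos P jn mt W = ?h ` {U. finite U \<and> U \<subseteq> W}" unfolding jclos_def by blast
  have "finite {U. finite U \<and> U \<subseteq> W}"
    by (rule finite_subset[of _ "Pow W"]) (use assms(1) in auto)
  then show "finite (jclos P jn mt W)" unfolding eq by simp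
  show "jclos P jn mt W \<subseteq> FC P jn mt"
  proof
    fix c assume "c \<in> jclos P jn mt W"
    then obtain U where U: "finite U" "U \<subseteq> W" "c = ?h U" unfolding eq by blast
    show "c \<in> FC P jn mt"
    proof (cases "U = {}")
      case True
      have "finite (FGen P jn mt ` P)" "FGen P jn mt ` P \<noteq> {}" "FGen P jn mt ` P \<subseteq> FC P jn mt"
        using fin ne FGen_FC[OF PL] by (auto simp del: FGen_def)
      then have "is_glb_in (FC P jn mt) (FLe P jn mt) (FGen P jn mt ` P) (FInf P jn mt (FGen P jn mt ` P))"
        by (rule FInf_glb[OF PL])
      then show ?thesis using True U(3) unfolding is_glb_in_def by simp
    next
      case False
      have "is_lub_in (FC P jn mt) (FLe P jn mt) U (FSup P jn mt U)"
        by (rule FSup_lub[OF PL fin ne U(1)]) (use U(2) assms(2) in blast)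
      then show ?thesis using False U(3) unfolding is_lub_in_def by simp
    qed
  qed
  show "W \<subseteq> jclos P jn mt W"
  proof
    fix w assume w: "w \<in> W"
    then have "w = ?h {w}" using FSup_single[OF PL] assms(2) by auto
    then show "w \<in> jclos P jn mt W" unfolding eq using w by blast
  qed
qed

lemma mclos_props:
  assumes "finite W" "W \<subseteq> FC P jn mt"
  shows "finite (mclos P jn mt W) \<and> mclos P jn mt W \<subseteq> FC P jn mt \<and> W \<subseteq> mclos P jn mt W"
proof (intro conjI)
  have eq: "mclos P jn mt W = FInf P jn mt ` {U. finite U \<and> U \<noteq> {} \<and> U \<subseteq> W}" unfolding mclos_def by blast
  have "finite {U. finite U \<and> U \<noteq> {} \<and> U \<subseteq> W}"
    by (rule finite_subset[of _ "Pow W"]) (use assms(1) in auto)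
  then show "finite (mclos P jn mt W)" unfolding eq by simp
  show "mclos P jn mt W \<subseteq> FC P jn mt"
  proof
    fix c assume "c \<in> mclos P jn mt W"
    then obtain U where U: "finite U" "U \<noteq> {}" "U \<subseteq> W" "c = FInf P jn mt U" unfolding eq by blast
    have "is_glb_in (FC P jn mt) (FLe P jn mt) U (FInf P jn mt U)"
      by (rule FInf_glb[OF PL U(1,2)]) (use U(3) assms(2) in blast)
    then show "c \<in> FC P jn mt" using U(4) unfolding is_glb_in_def by simp
  qed
  show "W \<subseteq> mclos P jn mt W"
  proof
    fix w assume w: "w \<in> W"
    then have "w = FInf P jn mt {w}" using FInf_single[OF PL] assms(2) by auto
    then show "w \<in> mclos P jn mt W" unfolding eq using w by blast
  qed
qed

lemma iter_props:
  "finite (((mclos P jn mt \<circ> jclos P jn mt) ^^ k) (FGen P jn mt ` P)) \<and>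
   ((mclos P jn mt \<circ> jclos P jn mt) ^^ k) (FGen P jn mt ` P) \<subseteq> FC P jn mt \<and>
   FGen P jn mt ` P \<subseteq> ((mclos P jn mt \<circ> jclos P jn mt) ^^ k) (FGen P jn mt ` P)"
proof (induction k)
  case 0
  then show ?case using fin FGen_FC[OF PL] by (auto simp del: FGen_def)
next
  case (Suc k)
  let ?W = "((mclos P jn mt \<circ> jclos P jn mt) ^^ k) (FGen P jn mt ` P)"
  have j: "finite (jclos P jn mt ?W) \<and> jclos P jn mt ?W \<subseteq> FC P jn mt \<and> ?W \<subseteq> jclos P jn mt ?W"
    using jclos_props Suc.IH by blast
  have m: "finite (mclos P jn mt (jclos P jn mt ?W)) \<and> mclos P jn mt (jclos P jn mt ?W) \<subseteq> FC P jn mt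
     \<and> jclos P jn mt ?W \<subseteq> mclos P jn mt (jclos P jn mt ?W)"
    using mclos_props j by blast
  have eq: "((mclos P jn mt \<circ> jclos P jn mt) ^^ Suc k) (FGen P jn mt ` P) = mclos P jn mt (jclos P jn mt ?W)"
    by simp
  show ?case unfolding eq using Suc.IH j m by blast
qed

lemma Sn_props:
  "finite (Sn P jn mt n) \<and> Sn P jn mt n \<subseteq> FC P jn mt \<and> FGen P jn mt ` P \<subseteq> Sn P jn mt n"
  unfolding Sn_def using iter_props[of n] jclos_props by blast

lemma std_key:
  assumes "S \<subseteq> FC P jn mt" "finite S" "d \<in> S" "c \<in> FC P jn mt"
  shows "FLe P jn mt d (std_hom P jn mt S c) \<longleftrightarrow> FLe P jn mt d c"
proof -
  let ?V = "{w \<in> S. FLe P jn mt w c}"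
  have V: "finite ?V" "?V \<subseteq> FC P jn mt" using assms(1,2) by auto
  have z: "is_lub_in (FC P jn mt) (FLe P jn mt) ?V (std_hom P jn mt S c)"
    unfolding std_hom_def by (rule FSup_lub[OF PL fin ne V])
  have zc: "FLe P jn mt (std_hom P jn mt S c) c" using z assms(4) unfolding is_lub_in_def by blast
  have zFC: "std_hom P jn mt S c \<in> FC P jn mt" using z unfolding is_lub_in_def by blast
  have dFC: "d \<in> FC P jn mt" using assms by blast
  show ?thesis
  proof
    assume "FLe P jn mt d (std_hom P jn mt S c)"
    then show "FLe P jn mt d c" using FLe_trans[OF PL dFC zFC assms(4)] zc by blast
  next
    assume "FLe P jn mt d c"
    then have "d \<in> ?V" using assms(3) by blast
    then show "FLe P jn mt d (std_hom P jn mt S c)" using z unfolding is_lub_in_def by blast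
  qed
qed

end


theorem mainTheorem14:
  fixes X :: "'a::lattice set"
    and P :: "'p set" and jn mt :: "'p set \<Rightarrow> 'p \<Rightarrow> bool"
    and n :: nat and g :: "'a \<Rightarrow> 'p lterm set"
  assumes "finite X" and "lat_gen X = UNIV"
    and "finite P" and "partial_lattice P jn mt"
    and "FL_hom P jn mt g"
    and "dean_FL P jn mt (range g) (g ` X)"
    and "g ` X \<subseteq> Sn P jn mt n"
  shows "lower_bounded g (FC P jn mt) (FLe P jn mt) \<longleftrightarrow>
         lower_bounded (std_hom P jn mt (Sn P jn mt n) \<circ> g) (Sn P jn mt n) (FLe P jn mt)"
proof -
  note PL = assms(4) and fin = assms(3)
  let ?L = "fle P jn mt"
  have gFC: "g x \<in> FC P jn mt" for x using assms(5) unfolding FL_hom_def by blast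
  define r where "r x = (SOME s. set_lterm s \<subseteq> P \<and> g x = fcls P jn mt s)" for x
  have r: "set_lterm (r x) \<subseteq> P \<and> g x = fcls P jn mt (r x)" for x
    unfolding r_def by (rule someI_ex) (rule FC_E[OF PL gFC])
  have ne: "P \<noteq> {}" using r[of undefined] set_lterm_ne[of "r undefined"] by blast
  define S where "S = Sn P jn mt n"
  have SFC: "finite S" "S \<subseteq> FC P jn mt" "FGen P jn mt ` P \<subseteq> S"
    using Sn_props[OF PL fin ne, of n] unfolding S_def by auto
  have key: "FLe P jn mt d (std_hom P jn mt S c) \<longleftrightarrow> FLe P jn mt d c"
    if "d \<in> S" "c \<in> FC P jn mt" for d c
    using std_key[OF PL fin ne SFC(2,1) that] .
  have FLe_g: "FLe P jn mt (fcls P jn mt t) (g x) \<longleftrightarrow> ?L t (r x)" if "set_lterm t \<subseteq> P" for t x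
    using r[of x] FLe_fcls[OF PL that, of "r x"] by simp
  have rsup: "?L (r (sup x y)) (Jn (r x) (r y)) \<and> ?L (Jn (r x) (r y)) (r (sup x y))" for x y
  proof -
    have "g (sup x y) = FSup P jn mt {g x, g y}" using assms(5) unfolding FL_hom_def by blast
    also have "\<dots> = fcls P jn mt (Jn (r x) (r y))" using FSup2[OF PL] r by metis
    finally show ?thesis using fcls_eq[OF PL, of "r (sup x y)" "Jn (r x) (r y)"] r by simp
  qed
  have rinf: "?L (r (inf x y)) (Mt (r x) (r y)) \<and> ?L (Mt (r x) (r y)) (r (inf x y))" for x y
  proof -
    have "g (inf x y) = FInf P jn mt {g x, g y}" using assms(5) unfolding FL_hom_def by blast
    also have "\<dots> = fcls P jn mt (Mt (r x) (r y))" using FInf2[OF PL] r by metis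
    finally show ?thesis using fcls_eq[OF PL, of "r (inf x y)" "Mt (r x) (r y)"] r by simp
  qed
  have meetcl: "?L t (r (inf x y))" if "?L t (r x)" "?L t (r y)" for t x y
  proof -
    have "?L t (Mt (r x) (r y))" using that by (rule fle.mt_greatest)
    then show ?thesis using rinf fle.trans by blast
  qed
  show ?thesis unfolding S_def[symmetric]
  proof
    assume lb: "lower_bounded g (FC P jn mt) (FLe P jn mt)"
    show "lower_bounded (std_hom P jn mt S \<circ> g) S (FLe P jn mt)"
      unfolding lower_bounded_def
    proof
      fix d assume d: "d \<in> S"
      have eq: "FLe P jn mt d ((std_hom P jn mt S \<circ> g) x) = FLe P jn mt d (g x)" for x
        using key[OF d gFC] by simp
      have "d \<in> FC P jn mt" using d SFC by blast
      with lb show "{x. FLe P jn mt d ((std_hom P jn mt S \<circ> g) x)} = {} \<or>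
          (\<exists>m. FLe P jn mt d ((std_hom P jn mt S \<circ> g) m) \<and>
               (\<forall>x. FLe P jn mt d ((std_hom P jn mt S \<circ> g) x) \<longrightarrow> m \<le> x))"
        unfolding eq lower_bounded_def by blast
    qed
  next
    assume lb: "lower_bounded (std_hom P jn mt S \<circ> g) S (FLe P jn mt)"
    have hypP: "{x. ?L (Gen p) (r x)} = {} \<or> (\<exists>m. ?L (Gen p) (r m) \<and> (\<forall>x. ?L (Gen p) (r x) \<longrightarrow> m \<le> x))"
      if p: "p \<in> P" for p
    proof -
      have dS: "FGen P jn mt p \<in> S" using SFC p by blast
      have gp: "set_lterm (Gen p) \<subseteq> P" using p by simp
      have eq: "FLe P jn mt (FGen P jn mt p) ((std_hom P jn mt S \<circ> g) x) = ?L (Gen p) (r x)" for x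
        using key[OF dS gFC] FLe_g[OF gp] unfolding FGen_def by simp
      have "{x. FLe P jn mt (FGen P jn mt p) ((std_hom P jn mt S \<circ> g) x)} = {} \<or>
          (\<exists>m. FLe P jn mt (FGen P jn mt p) ((std_hom P jn mt S \<circ> g) m) \<and>
               (\<forall>x. FLe P jn mt (FGen P jn mt p) ((std_hom P jn mt S \<circ> g) x) \<longrightarrow> m \<le> x))"
        using lb dS unfolding lower_bounded_def by blast
      then show ?thesis unfolding eq .
    qed
    define mp where "mp p = (SOME m. ?L (Gen p) (r m) \<and> (\<forall>x. ?L (Gen p) (r x) \<longrightarrow> m \<le> x))" for p
    have mp: "?L (Gen p) (r (mp p)) \<and> (\<forall>x. ?L (Gen p) (r x) \<longrightarrow> mp p \<le> x)"
      if "p \<in> P" "?L (Gen p) (r x)" for p x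
    proof -
      have "\<exists>m. ?L (Gen p) (r m) \<and> (\<forall>x. ?L (Gen p) (r x) \<longrightarrow> m \<le> x)" using hypP[OF that(1)] that(2) by blast
      then show ?thesis unfolding mp_def by (rule someI_ex)
    qed
    have claim: "set_lterm d \<subseteq> P \<Longrightarrow> \<exists>Y. finite Y \<and> (\<forall>x. ?L d (r x) \<longrightarrow> (\<exists>y\<in>Y. y \<le> x \<and> ?L d (r y)))" for d
    proof (induction d)
      case (Gen p)
      then have p: "p \<in> P" by simp
      show ?case
      proof (cases "\<exists>x. ?L (Gen p) (r x)")
        case False then show ?thesis by (intro exI[of _ "{}"]) auto
      next
        case True
        then obtain x0 where "?L (Gen p) (r x0)" by blast
        from mp[OF p this] show ?thesis by (intro exI[of _ "{mp p}"]) auto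
      qed
    next
      case (Jn d1 d2)
      have s: "set_lterm d1 \<subseteq> P" "set_lterm d2 \<subseteq> P" using Jn.prems by auto
      obtain Y1 where Y1: "finite Y1" "\<forall>x. ?L d1 (r x) \<longrightarrow> (\<exists>y\<in>Y1. y \<le> x \<and> ?L d1 (r y))"
        using Jn.IH(1) s(1) by blast
      obtain Y2 where Y2: "finite Y2" "\<forall>x. ?L d2 (r x) \<longrightarrow> (\<exists>y\<in>Y2. y \<le> x \<and> ?L d2 (r y))"
        using Jn.IH(2) s(2) by blast
      let ?Y = "(\<lambda>(a, b). sup a b) ` (Y1 \<times> Y2)"
      have "\<exists>y\<in>?Y. y \<le> x \<and> ?L (Jn d1 d2) (r y)" if x: "?L (Jn d1 d2) (r x)" for x
      proof -
        have "?L d1 (Jn d1 d2)" using s by (rule fle.jn_upper1)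
        then have "?L d1 (r x)" using x by (rule fle.trans)
        then obtain y1 where y1: "y1 \<in> Y1" "y1 \<le> x" "?L d1 (r y1)" using Y1 by blast
        have "?L d2 (Jn d1 d2)" using s by (rule fle.jn_upper2)
        then have "?L d2 (r x)" using x by (rule fle.trans)
        then obtain y2 where y2: "y2 \<in> Y2" "y2 \<le> x" "?L d2 (r y2)" using Y2 by blast
        have sr: "set_lterm (r y1) \<subseteq> P" "set_lterm (r y2) \<subseteq> P" using r by auto
        have "?L (r y1) (Jn (r y1) (r y2))" using sr by (rule fle.jn_upper1)
        then have "?L (r y1) (r (sup y1 y2))" using rsup fle.trans by blast
        then have a: "?L d1 (r (sup y1 y2))" using y1(3) fle.trans by blast
        have "?L (r y2) (Jn (r y1) (r y2))" using sr by (rule fle.jn_upper2)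
        then have "?L (r y2) (r (sup y1 y2))" using rsup fle.trans by blast
        then have b: "?L d2 (r (sup y1 y2))" using y2(3) fle.trans by blast
        have "?L (Jn d1 d2) (r (sup y1 y2))" using a b by (rule fle.jn_least)
        moreover have "sup y1 y2 \<le> x" using y1(2) y2(2) by simp
        moreover have "sup y1 y2 \<in> ?Y" using y1(1) y2(1) by force
        ultimately show ?thesis by blast
      qed
      moreover have "finite ?Y" using Y1(1) Y2(1) by simp
      ultimately show ?case by blast
    next
      case (Mt d1 d2)
      have s: "set_lterm d1 \<subseteq> P" "set_lterm d2 \<subseteq> P" using Mt.prems by auto
      obtain Y1 where Y1: "finite Y1" "\<forall>x. ?L d1 (r x) \<longrightarrow> (\<exists>y\<in>Y1. y \<le> x \<and> ?L d1 (r y))"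
        using Mt.IH(1) s(1) by blast
      obtain Y2 where Y2: "finite Y2" "\<forall>x. ?L d2 (r x) \<longrightarrow> (\<exists>y\<in>Y2. y \<le> x \<and> ?L d2 (r y))"
        using Mt.IH(2) s(2) by blast
      define B where "B = X \<union> Y1 \<union> Y2 \<union> mp ` P"
      have finB: "finite B" unfolding B_def using assms(1) fin Y1(1) Y2(1) by simp
      let ?d = "Mt d1 d2"
      have md1: "?L ?d d1" using s by (rule fle.mt_lower1)
      have md2: "?L ?d d2" using s by (rule fle.mt_lower2)
      have inner: "?L ?d (r x) \<longrightarrow> (\<exists>Z. Z \<subseteq> B \<and> Z \<noteq> {} \<and> Inf_fin Z \<le> x \<and> ?L ?d (r (Inf_fin Z)))"
        if "x \<in> lat_gen X" for x
        using that
      proof (induction x rule: lat_gen.induct)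
        case (base x)
        then show ?case by (intro impI exI[of _ "{x}"]) (auto simp: B_def)
      next
        case (inf x y)
        show ?case
        proof
          assume h: "?L ?d (r (inf x y))"
          have sr: "set_lterm (r x) \<subseteq> P" "set_lterm (r y) \<subseteq> P" using r by auto
          have "?L (Mt (r x) (r y)) (r x)" using sr by (rule fle.mt_lower1)
          then have "?L (r (inf x y)) (r x)" using rinf fle.trans by blast
          then have hx: "?L ?d (r x)" using h fle.trans by blast
          have "?L (Mt (r x) (r y)) (r y)" using sr by (rule fle.mt_lower2)
          then have "?L (r (inf x y)) (r y)" using rinf fle.trans by blast
          then have hy: "?L ?d (r y)" using h fle.trans by blast
          obtain Z1 where Z1: "Z1 \<subseteq> B" "Z1 \<noteq> {}" "Inf_fin Z1 \<le> x" "?L ?d (r (Inf_fin Z1))"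
            using inf.IH(1) hx by blast
          obtain Z2 where Z2: "Z2 \<subseteq> B" "Z2 \<noteq> {}" "Inf_fin Z2 \<le> y" "?L ?d (r (Inf_fin Z2))"
            using inf.IH(2) hy by blast
          have f: "finite Z1" "finite Z2" using Z1(1) Z2(1) finB finite_subset by auto
          have u: "Inf_fin (Z1 \<union> Z2) = inf (Inf_fin Z1) (Inf_fin Z2)"
            using Inf_fin.union[OF f(1) Z1(2) f(2) Z2(2)] .
          have "Inf_fin (Z1 \<union> Z2) \<le> inf x y" unfolding u using Z1(3) Z2(3) inf_mono by blast
          moreover have "?L ?d (r (Inf_fin (Z1 \<union> Z2)))" unfolding u using Z1(4) Z2(4) by (rule meetcl)
          moreover have "Z1 \<union> Z2 \<subseteq> B" "Z1 \<union> Z2 \<noteq> {}" using Z1 Z2 by auto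
          ultimately show "\<exists>Z. Z \<subseteq> B \<and> Z \<noteq> {} \<and> Inf_fin Z \<le> inf x y \<and> ?L ?d (r (Inf_fin Z))" by blast
        qed
      next
        case (sup x y)
        show ?case
        proof
          assume h: "?L ?d (r (sup x y))"
          have sr: "set_lterm (r x) \<subseteq> P" "set_lterm (r y) \<subseteq> P" using r by auto
          have h2: "?L ?d (Jn (r x) (r y))" using h rsup fle.trans by blast
          have bk: "?L t (r (sup x y))" if "?L t (Jn (r x) (r y))" for t
            using that rsup fle.trans by blast
          have single: "\<exists>Z. Z \<subseteq> B \<and> Z \<noteq> {} \<and> Inf_fin Z \<le> sup x y \<and> ?L ?d (r (Inf_fin Z))"
            if "z \<in> B" "z \<le> sup x y" "?L ?d (r z)" for z
            using that by (intro exI[of _ "{z}"]) auto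
          from D2[OF PL s sr h2]
          show "\<exists>Z. Z \<subseteq> B \<and> Z \<noteq> {} \<and> Inf_fin Z \<le> sup x y \<and> ?L ?d (r (Inf_fin Z))"
          proof (elim disjE)
            assume "?L d1 (Jn (r x) (r y))"
            then have "?L d1 (r (sup x y))" by (rule bk)
            then obtain y1 where y1: "y1 \<in> Y1" "y1 \<le> sup x y" "?L d1 (r y1)" using Y1 by blast
            have "?L ?d (r y1)" using md1 y1(3) by (rule fle.trans)
            moreover have "y1 \<in> B" using y1(1) unfolding B_def by blast
            ultimately show ?thesis using single y1(2) by blast
          next
            assume "?L d2 (Jn (r x) (r y))"
            then have "?L d2 (r (sup x y))" by (rule bk)
            then obtain y2 where y2: "y2 \<in> Y2" "y2 \<le> sup x y" "?L d2 (r y2)" using Y2 by blast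
            have "?L ?d (r y2)" using md2 y2(3) by (rule fle.trans)
            moreover have "y2 \<in> B" using y2(1) unfolding B_def by blast
            ultimately show ?thesis using single y2(2) by blast
          next
            assume "?L ?d (r x)"
            then obtain Z where Z: "Z \<subseteq> B" "Z \<noteq> {}" "Inf_fin Z \<le> x" "?L ?d (r (Inf_fin Z))"
              using sup.IH(1) by blast
            have "Inf_fin Z \<le> sup x y" using Z(3) le_supI1 by blast
            then show ?thesis using Z by blast
          next
            assume "?L ?d (r y)"
            then obtain Z where Z: "Z \<subseteq> B" "Z \<noteq> {}" "Inf_fin Z \<le> y" "?L ?d (r (Inf_fin Z))"
              using sup.IH(2) by blast
            have "Inf_fin Z \<le> sup x y" using Z(3) le_supI2 by blast
            then show ?thesis using Z by blast
          next
            assume "\<exists>p\<in>P. ?L ?d (Gen p) \<and> ?L (Gen p) (Jn (r x) (r y))"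
            then obtain p where p: "p \<in> P" "?L ?d (Gen p)" "?L (Gen p) (Jn (r x) (r y))" by blast
            have gs: "?L (Gen p) (r (sup x y))" using p(3) by (rule bk)
            from mp[OF p(1) gs] gs have m: "?L (Gen p) (r (mp p))" "mp p \<le> sup x y" by auto
            have "?L ?d (r (mp p))" using p(2) m(1) by (rule fle.trans)
            moreover have "mp p \<in> B" using p(1) unfolding B_def by blast
            ultimately show ?thesis using single m(2) by blast
          qed
        qed
      qed
      let ?Y = "Inf_fin ` {Z. Z \<subseteq> B \<and> Z \<noteq> {}}"
      have "finite ?Y"
        by (rule finite_imageI, rule finite_subset[of _ "Pow B"]) (use finB in auto)
      moreover have "\<exists>y\<in>?Y. y \<le> x \<and> ?L ?d (r y)" if "?L ?d (r x)" for x
        using inner[of x] assms(2) that by blast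
      ultimately show ?case by blast
    qed
    show "lower_bounded g (FC P jn mt) (FLe P jn mt)"
      unfolding lower_bounded_def
    proof
      fix c assume "c \<in> FC P jn mt"
      then obtain t where t: "set_lterm t \<subseteq> P" "c = fcls P jn mt t" using FC_E[OF PL] by blast
      have eq: "FLe P jn mt c (g x) = ?L t (r x)" for x using FLe_g[OF t(1)] t(2) by simp
      obtain Y where Y: "finite Y" "\<forall>x. ?L t (r x) \<longrightarrow> (\<exists>y\<in>Y. y \<le> x \<and> ?L t (r y))"
        using claim[OF t(1)] by blast
      show "{x. FLe P jn mt c (g x)} = {} \<or> (\<exists>m. FLe P jn mt c (g m) \<and> (\<forall>x. FLe P jn mt c (g x) \<longrightarrow> m \<le> x))"
        unfolding eq
      proof (cases "\<exists>x0. ?L t (r x0)")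
        case False then show "{x. ?L t (r x)} = {} \<or> (\<exists>m. ?L t (r m) \<and> (\<forall>x. ?L t (r x) \<longrightarrow> m \<le> x))" by blast
      next
        case True
        then obtain x0 where x0: "?L t (r x0)" by blast
        let ?Z = "{y \<in> Y. ?L t (r y)}"
        have "?Z \<noteq> {}" using Y(2) x0 by blast
        moreover have "finite ?Z" using Y(1) by simp
        ultimately obtain m where m: "?L t (r m)" "\<forall>z\<in>?Z. m \<le> z"
          using lowb[of ?Z "\<lambda>y. ?L t (r y)"] meetcl by blast
        have "\<forall>x. ?L t (r x) \<longrightarrow> m \<le> x"
        proof (intro allI impI)
          fix x assume "?L t (r x)"
          then obtain y where "y \<in> Y" "y \<le> x" "?L t (r y)" using Y(2) by blast
          then show "m \<le> x" using m(2) order_trans by blast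
        qed
        then show "{x. ?L t (r x)} = {} \<or> (\<exists>m. ?L t (r m) \<and> (\<forall>x. ?L t (r x) \<longrightarrow> m \<le> x))"
          using m(1) by blast
      qed
    qed
  qed
qed


end
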